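(* Consider the linear model $Y=X\beta^0+\epsilon$ with $Y\in\mathbb{R}^n$, $X\in\mathbb{R}^{n\times p}$, $\beta^0\in\mathbb{R}^p$, and noise $\epsilon\in\mathbb{R}^n$ with i.i.d. entries of mean $0$ and variance $\sigma^2$. Let $\Omega$ be a norm on $\mathbb{R}^p$, $\lambda>0$, $\hat\beta$ a minimizer of $\beta\mapsto\|Y-X\beta\|_n+\lambda\Omega(\beta)$, $\hat\epsilon:=Y-X\hat\beta$, and let $f,\lambda^0$ be as in the context. Assume Assumption I (see context). Let $S\subseteq\{1,\dots,p\}$ be an allowed set for $\Omega$ with associated norm $\Omega^{S^c}$ (Assumption II), let $\beta\in\mathbb{R}^p$ with $\operatorname{supp}(\beta)\subseteq S$, and let $0\le\delta<1$. Assume $a\lambda^m<\lambda$ where $a=3(1+f)$. Define $$\lambda^*:=\lambda\,\frac{1-\frac{\lambda^0}{\lambda}(1+2f)}{f+2},\qquad \tilde\lambda:=\lambda(1+f),\qquad L_S:=\frac{\tilde\lambda+\lambda^m}{\lambda^*-\lambda^m}\cdot\frac{1+\delta}{1-\delta}.$$ Then $$\|X(\hat\beta-\beta^0)\|_n^2+2\delta\|\epsilon\|_n\Big[(\lambda^*+\lambda^m)\Omega(\hat\beta_S-\beta)+(\lambda^*-\lambda^m)\Omega^{S^c}(\hat\beta_{S^c})\Big]\le \|X(\beta-\beta^0)\|_n^2+\|\epsilon\|_n^2\big[(1+\delta)(\tilde\lambda+\lambda^m)\big]^2\,\Gamma_\Omega^2(L_S,S).$$ Moreover, for each allowed set $S$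 (with its norm $\Omega^{S^c}$ and its quantities $\lambda^m=\lambda^m(S)$, $L_S$) let $\beta_\star(S)$ be a minimizer, over $\beta$ with $\operatorname{supp}(\beta)\subseteq S$, of $\|X(\beta-\beta^0)\|_n^2+\|\epsilon\|_n^2[(1+\delta)(\tilde\lambda+\lambda^m(S))]^2\Gamma_\Omega^2(L_S,S)$; let $S_\star$ be a minimizer over allowed sets $S$ of $\|X(\beta_\star(S)-\beta^0)\|_n^2+\|\epsilon\|_n^2[(1+\delta)(\tilde\lambda+\lambda^m(S))]^2\Gamma_\Omega^2(L_S,S)$, and $\beta_\star:=\beta_\star(S_\star)$. If the hypotheses above hold with $S=S_\star$ (in particular $a\lambda^m(S_\star)<\lambda$), then, writing $\lambda^m=\lambda^m(S_\star)$, $$\|X(\hat\beta-\beta^0)\|_n^2\le\|X(\beta_\star-\beta^0)\|_n^2+\|\epsilon\|_n^2(1+\delta)^2(\tilde\lambda+\lambda^m)^2\,\Gamma_\Omega^2(L_{S_\star},S_\star),$$ and, if $\delta>0$, $$\Omega(\hat\beta_{S_\star}-\beta_\star)+\Omega^{S_\star^c}(\hat\beta_{S_\star^c})\le\frac{1}{2\delta\|\epsilon\|_n}\cdot\frac{\|X(\beta_\star-\beta^0)\|_n^2}{\lambda^*-\lambda^m}+\frac{(1+\delta)^2\|\epsilon\|_n}{2\delta}\cdot\frac{(\tilde\lambda+\lambda^m)^2}{\lambda^*-\lambda^m}\,\Gamma_\Omega^2(L_{S_\star},S_\star).$$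
   Context: For $a\in\mathbb{R}^n$, $\|a\|_n:=(\sum_{j=1}^n a_j^2/n)^{1/2}$. For a norm $N$, its dual is $N^*(x):=\max_{N(z)\le1}z^Tx$. For $S\subseteq\{1,\dots,p\}$ and $\beta\in\mathbb{R}^p$, $\beta_S$ denotes the restriction of $\beta$ to coordinates in $S$; when $\Omega$ (a norm on $\mathbb{R}^p$) is applied to $\beta_S$, $\beta_S$ is viewed as the vector in $\mathbb{R}^p$ with coordinates outside $S$ set to $0$, and when a norm on $\mathbb{R}^{|S^c|}$ is applied to $\beta_{S^c}$ it is viewed as $(\beta_j)_{j\in S^c}$. Weak decomposability (Assumption II): $\Omega$ is weakly decomposable for $S$ if there is a norm $\Omega^{S^c}$ on $\mathbb{R}^{|S^c|}$ with $\Omega(\beta)\ge\Omega(\beta_S)+\Omega^{S^c}(\beta_{S^c})$ for all $\beta\in\mathbb{R}^p$; such $S$ is called allowed. Quantities: $f:=\lambda\Omega(\beta^0)/\|\epsilon\|_n$; $\lambda^0:=\Omega^*(\epsilon^TX)/(n\|\epsilon\|_n)$; $\lambda^S:=\Omega^*((\epsilon^TX)_S)/(n\|\epsilon\|_n)$; $\lambda^{S^c}:=\Omega^{S^c*}((\epsilon^TX)_{S^c})/(n\|\epsilon\|_n)$ with $\Omega^{S^c*}$ the dual of $\Omega^{S^c}$; $\lambda^m:=\max(\lambda^S,\lambda^{S^c})$. Assumption I: $P\big(Y\in\{\tilde Y:\min_{\beta:X\beta=\tilde Y}\Omega(\beta)\le\|\epsilon\|_n\}\big)=0$ and $\frac{\lambda^0}{\lambda}(1+2f)<1$.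 $\Omega$-eigenvalue: for $L>0$ and allowed $S$, $\delta_\Omega(L,S):=\min\{\|X\beta_S-X\beta_{S^c}\|_n:\ \Omega(\beta_S)=1,\ \Omega^{S^c}(\beta_{S^c})\le L\}$; $\Omega$-effective sparsity $\Gamma_\Omega^2(L,S):=1/\delta_\Omega^2(L,S)$. *)

theory Defs
  imports "HOL-Analysis.Analysis"
begin

text \<open>Vectors in R^n and R^p are rendered as real^'n, real^'p for finite index types;
  the design matrix X (n rows, p columns) is real^'p^'n.\<close>

definition nnorm :: "real^'n::finite \<Rightarrow> real" where
  "nnorm a = sqrt ((\<Sum>j\<in>UNIV. (a $ j)^2) / real CARD('n))"

definition restr :: "'p::finite set \<Rightarrow> real^'p \<Rightarrow> real^'p" where
  "restr S b = (\<chi> i. if i \<in> S then b $ i else 0)"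

definition supp :: "real^'p::finite \<Rightarrow> 'p set" where
  "supp b = {i. b $ i \<noteq> 0}"

definition coordsub :: "'p::finite set \<Rightarrow> (real^'p) set" where
  "coordsub T = {x. \<forall>i. i \<notin> T \<longrightarrow> x $ i = 0}"

definition norm_on :: "(real^'p::finite) set \<Rightarrow> (real^'p \<Rightarrow> real) \<Rightarrow> bool" where
  "norm_on V N \<longleftrightarrow>
     (\<forall>x\<in>V. 0 \<le> N x) \<and> (\<forall>x\<in>V. N x = 0 \<longrightarrow> x = 0) \<and>
     (\<forall>x\<in>V. \<forall>c. N (c *\<^sub>R x) = \<bar>c\<bar> * N x) \<and>
     (\<forall>x\<in>V. \<forall>y\<in>V. N (x + y) \<le> N x + N y)"

abbreviation is_norm :: "(real^'p::finite \<Rightarrow> real) \<Rightarrow> bool" where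
  "is_norm N \<equiv> norm_on UNIV N"

definition dual_on :: "(real^'p::finite) set \<Rightarrow> (real^'p \<Rightarrow> real) \<Rightarrow> real^'p \<Rightarrow> real" where
  "dual_on V N v = Sup {w \<bullet> v | w. w \<in> V \<and> N w \<le> 1}"

text \<open>Weak decomposability (Assumption II): OSc is a norm on R^{|S^c|}, represented as a
  norm on the coordinate subspace coordsub (-S), always applied to restr (-S) b.\<close>
definition wdec :: "(real^'p::finite \<Rightarrow> real) \<Rightarrow> 'p set \<Rightarrow> (real^'p \<Rightarrow> real) \<Rightarrow> bool" where
  "wdec Omega S OSc \<longleftrightarrow> norm_on (coordsub (- S)) OSc \<and>
     (\<forall>b. Omega b \<ge> Omega (restr S b) + OSc (restr (- S) b))"

definition allowed :: "(real^'p::finite \<Rightarrow> real) \<Rightarrow> 'p set \<Rightarrow> bool" where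
  "allowed Omega S \<longleftrightarrow> (\<exists>OSc. wdec Omega S OSc)"

definition f_q :: "real \<Rightarrow> (real^'p::finite \<Rightarrow> real) \<Rightarrow> real^'p \<Rightarrow> real^'n::finite \<Rightarrow> real" where
  "f_q lam Omega beta0 eps = lam * Omega beta0 / nnorm eps"

definition lam0 :: "real^'p::finite^'n::finite \<Rightarrow> real^'n \<Rightarrow> (real^'p \<Rightarrow> real) \<Rightarrow> real" where
  "lam0 X eps Omega = dual_on UNIV Omega (eps v* X) / (real CARD('n) * nnorm eps)"

definition lamS :: "real^'p::finite^'n::finite \<Rightarrow> real^'n \<Rightarrow> (real^'p \<Rightarrow> real) \<Rightarrow> 'p set \<Rightarrow> real" where
  "lamS X eps Omega S = dual_on UNIV Omega (restr S (eps v* X)) / (real CARD('n) * nnorm eps)"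

definition lamSc :: "real^'p::finite^'n::finite \<Rightarrow> real^'n \<Rightarrow> 'p set \<Rightarrow> (real^'p \<Rightarrow> real) \<Rightarrow> real" where
  "lamSc X eps S OSc = dual_on (coordsub (- S)) OSc (restr (- S) (eps v* X)) / (real CARD('n) * nnorm eps)"

definition lam_m :: "real^'p::finite^'n::finite \<Rightarrow> real^'n \<Rightarrow> (real^'p \<Rightarrow> real) \<Rightarrow> 'p set \<Rightarrow> (real^'p \<Rightarrow> real) \<Rightarrow> real" where
  "lam_m X eps Omega S OSc = max (lamS X eps Omega S) (lamSc X eps S OSc)"

text \<open>Omega-eigenvalue, as an extended real (min over the empty set is +infinity).\<close>
definition delta_Omega :: "real^'p::finite^'n::finite \<Rightarrow> (real^'p \<Rightarrow> real) \<Rightarrow> 'p set \<Rightarrow> (real^'p \<Rightarrow> real) \<Rightarrow> real \<Rightarrow> ereal" where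
  "delta_Omega X Omega S OSc L = Inf (ereal ` {nnorm (X *v restr S b - X *v restr (- S) b) | b.
       Omega (restr S b) = 1 \<and> OSc (restr (- S) b) \<le> L})"

text \<open>Effective sparsity Gamma^2 = 1/delta^2 in the extended reals (1/0 = infinity, 1/infinity = 0).\<close>
definition Gamma2 :: "real^'p::finite^'n::finite \<Rightarrow> (real^'p \<Rightarrow> real) \<Rightarrow> 'p set \<Rightarrow> (real^'p \<Rightarrow> real) \<Rightarrow> real \<Rightarrow> ereal" where
  "Gamma2 X Omega S OSc L = inverse (delta_Omega X Omega S OSc L * delta_Omega X Omega S OSc L)"

end

theory Submission
  imports Defs
begin


lemma coordsub_UNIV[simp]: "coordsub UNIV = UNIV"
  by (auto simp: coordsub_def)

lemma coordsub_add: "x \<in> coordsub T \<Longrightarrow> y \<in> coordsub T \<Longrightarrow> x + y \<in> coordsub T"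
  by (auto simp: coordsub_def)
lemma coordsub_diff: "x \<in> coordsub T \<Longrightarrow> y \<in> coordsub T \<Longrightarrow> x - y \<in> coordsub T"
  by (auto simp: coordsub_def)
lemma coordsub_scale: "x \<in> coordsub T \<Longrightarrow> c *\<^sub>R x \<in> coordsub T"
  by (auto simp: coordsub_def)
lemma coordsub_zero[simp]: "0 \<in> coordsub T"
  by (auto simp: coordsub_def)
lemma restr_coordsub[simp]: "restr T b \<in> coordsub T"
  by (auto simp: coordsub_def restr_def)

lemma norm_on_zero: assumes "norm_on (coordsub T) N" shows "N 0 = 0"
proof -
  have h: "\<forall>x\<in>coordsub T. \<forall>c. N (c *\<^sub>R x) = \<bar>c\<bar> * N x" using assms unfolding norm_on_def by blast
  have "N ((0::real) *\<^sub>R 0) = \<bar>0::real\<bar> * N 0" using h coordsub_zero by blast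
  then show ?thesis by simp
qed

lemma norm_on_minus: assumes "norm_on (coordsub T) N" "x \<in> coordsub T" shows "N (- x) = N x"
proof -
  have "N ((-1::real) *\<^sub>R x) = \<bar>-1::real\<bar> * N x" using assms unfolding norm_on_def by blast
  then show ?thesis by simp
qed

lemma norm_on_sum:
  assumes "norm_on (coordsub T) N" "finite I" "\<forall>i\<in>I. g i \<in> coordsub T"
  shows "N (sum g I) \<le> (\<Sum>i\<in>I. N (g i)) \<and> sum g I \<in> coordsub T"
  using assms(2,3)
proof (induction I rule: finite_induct)
  case empty then show ?case using norm_on_zero[OF assms(1)] by simp
next
  case (insert i I)
  then have h: "N (sum g I) \<le> (\<Sum>i\<in>I. N (g i))" "sum g I \<in> coordsub T" "g i \<in> coordsub T" by auto
  have "N (g i + sum g I) \<le> N (g i) + N (sum g I)"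
    using assms(1) h unfolding norm_on_def by blast
  then show ?case using insert h by (auto intro: coordsub_add)
qed

lemma norm_on_upper:
  assumes "norm_on (coordsub T) N"
  shows "\<exists>M\<ge>0. \<forall>x\<in>coordsub T. N x \<le> M * norm x"
proof -
  define M where "M = (\<Sum>i\<in>T. N (axis i 1))"
  have ax: "axis i 1 \<in> coordsub T" if "i \<in> T" for i
    using that by (auto simp: coordsub_def axis_def)
  have Mnn: "M \<ge> 0" unfolding M_def using assms ax unfolding norm_on_def by (auto intro: sum_nonneg)
  have "N x \<le> M * norm x" if x: "x \<in> coordsub T" for x
  proof -
    have "x = (\<Sum>i\<in>UNIV. (x$i) *\<^sub>R axis i 1)" using basis_expansion[of x] by (simp add: scalar_mult_eq_scaleR)
    also have "\<dots> = (\<Sum>i\<in>T. (x$i) *\<^sub>R axis i 1)"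
      by (rule sum.mono_neutral_right) (use x in \<open>auto simp: coordsub_def\<close>)
    finally have xe: "x = (\<Sum>i\<in>T. (x$i) *\<^sub>R axis i 1)" .
    have "N x \<le> (\<Sum>i\<in>T. N ((x$i) *\<^sub>R axis i 1))"
      using norm_on_sum[OF assms, of T "\<lambda>i. (x$i) *\<^sub>R axis i 1"] xe ax coordsub_scale
      by (metis finite)
    also have "\<dots> = (\<Sum>i\<in>T. \<bar>x$i\<bar> * N (axis i 1))"
      using assms ax unfolding norm_on_def by (intro sum.cong) auto
    also have "\<dots> \<le> (\<Sum>i\<in>T. norm x * N (axis i 1))"
      using assms ax component_le_norm_cart unfolding norm_on_def
      by (intro sum_mono mult_right_mono) auto
    also have "\<dots> = M * norm x" by (simp add: M_def sum_distrib_left mult.commute)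
    finally show ?thesis .
  qed
  then show ?thesis using Mnn by blast
qed

lemma norm_on_cont:
  assumes "norm_on (coordsub T) N"
  shows "continuous_on (coordsub T) N"
proof -
  obtain M where M: "M \<ge> 0" "\<forall>x\<in>coordsub T. N x \<le> M * norm x" using norm_on_upper[OF assms] by blast
  have lip: "\<bar>N x - N y\<bar> \<le> M * norm (x - y)" if "x \<in> coordsub T" "y \<in> coordsub T" for x y
  proof -
    have d: "x - y \<in> coordsub T" "y - x \<in> coordsub T" using that coordsub_diff by auto
    have "N x \<le> N (x - y) + N y" using assms that d unfolding norm_on_def
      by (metis diff_add_cancel)
    moreover have "N y \<le> N (y - x) + N x" using assms that d unfolding norm_on_def
      by (metis diff_add_cancel)
    moreover have "N (y - x) = N (x - y)" using norm_on_minus[OF assms d(1)] by (simp)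
    moreover have "N (x - y) \<le> M * norm (x - y)" using M d by blast
    ultimately show ?thesis by linarith
  qed
  show ?thesis unfolding continuous_on_iff
  proof (intro ballI allI impI)
    fix x e assume x: "x \<in> coordsub T" and e: "(0::real) < e"
    show "\<exists>d>0. \<forall>x'\<in>coordsub T. dist x' x < d \<longrightarrow> dist (N x') (N x) < e"
    proof (intro exI[of _ "e / (M + 1)"] conjI ballI impI)
      show "e / (M+1) > 0" using e M by simp
      fix y assume y: "y \<in> coordsub T" and dy: "dist y x < e / (M + 1)"
      have "dist (N y) (N x) \<le> M * norm (y - x)" using lip[OF y x] by (simp add: dist_real_def)
      also have "\<dots> \<le> M * (e / (M+1))" using dy M by (intro mult_left_mono) (auto simp: dist_norm)
      also have "\<dots> < e" using M e by (simp add: field_simps)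
      finally show "dist (N y) (N x) < e" .
    qed
  qed
qed

lemma closed_coordsub: "closed (coordsub T)"
proof -
  have "coordsub T = (\<Inter>i\<in>-T. {x. x $ i = 0})" by (auto simp: coordsub_def)
  moreover have "closed {x::real^'a. x $ i = 0}" for i
    by (rule closed_Collect_eq) (auto intro: continuous_intros)
  ultimately show ?thesis by auto
qed

lemma norm_on_lower:
  assumes "norm_on (coordsub T) N"
  shows "\<exists>c>0. \<forall>x\<in>coordsub T. c * norm x \<le> N x"
proof (cases "sphere 0 1 \<inter> coordsub T = {}")
  case True
  have "x = 0" if "x \<in> coordsub T" for x
  proof (rule ccontr)
    assume "x \<noteq> 0"
    then have "(1 / norm x) *\<^sub>R x \<in> sphere 0 1 \<inter> coordsub T" using that coordsub_scale by auto
    then show False using True by auto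
  qed
  then have "\<forall>x\<in>coordsub T. 1 * norm x \<le> N x" using norm_on_zero[OF assms] by (metis mult_1 norm_zero order_refl)
  then show ?thesis by (intro exI[of _ 1]) auto
next
  case False
  have "compact (sphere 0 1 \<inter> coordsub T)"
    by (intro compact_Int_closed closed_coordsub) auto
  moreover have "continuous_on (sphere 0 1 \<inter> coordsub T) N"
    by (rule continuous_on_subset[OF norm_on_cont[OF assms]]) auto
  ultimately obtain z where z: "z \<in> sphere 0 1 \<inter> coordsub T" "\<forall>y\<in>sphere 0 1 \<inter> coordsub T. N z \<le> N y"
    using continuous_attains_inf False by metis
  have cpos: "N z > 0" using assms z unfolding norm_on_def
    by (metis IntE less_eq_real_def mem_sphere_0 norm_zero zero_neq_one)
  have "N z * norm x \<le> N x" if x: "x \<in> coordsub T" for x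
  proof (cases "x = 0")
    case True then show ?thesis using norm_on_zero[OF assms] by simp
  next
    case False
    have u: "(1 / norm x) *\<^sub>R x \<in> sphere 0 1 \<inter> coordsub T" using False x coordsub_scale by auto
    then have "N z \<le> N ((1 / norm x) *\<^sub>R x)" using z by blast
    also have "\<dots> = N x / norm x" using assms x unfolding norm_on_def by simp
    finally show ?thesis using False by (simp add: field_simps)
  qed
  then show ?thesis using cpos by blast
qed

lemma dual_props:
  assumes "norm_on (coordsub T) N"
  shows "0 \<le> dual_on (coordsub T) N v"
    and "\<And>w. w \<in> coordsub T \<Longrightarrow> w \<bullet> v \<le> N w * dual_on (coordsub T) N v"
proof -
  obtain c where c: "c > 0" "\<forall>x\<in>coordsub T. c * norm x \<le> N x" using norm_on_lower[OF assms] by blast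
  let ?A = "{w \<bullet> v | w. w \<in> coordsub T \<and> N w \<le> 1}"
  have bdd: "bdd_above ?A"
  proof (rule bdd_aboveI)
    fix y assume "y \<in> ?A"
    then obtain w where w: "y = w \<bullet> v" "w \<in> coordsub T" "N w \<le> 1" by blast
    have "c * norm w \<le> 1" using c w by (meson order.trans)
    then have nw: "norm w \<le> 1 / c" using c by (simp add: field_simps)
    have "y \<le> norm w * norm v" using w Cauchy_Schwarz_ineq2 by (metis norm_cauchy_schwarz)
    also have "\<dots> \<le> 1 / c * norm v" using nw by (intro mult_right_mono) auto
    finally show "y \<le> 1 / c * norm v" .
  qed
  have "0 = (0::real^'a) \<bullet> v \<and> (0::real^'a) \<in> coordsub T \<and> N 0 \<le> 1" using norm_on_zero[OF assms] by simp
  then have z: "0 \<in> ?A" by blast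
  show "0 \<le> dual_on (coordsub T) N v" unfolding dual_on_def by (rule cSup_upper[OF z bdd])
  fix w assume w: "w \<in> coordsub T"
  show "w \<bullet> v \<le> N w * dual_on (coordsub T) N v"
  proof (cases "N w = 0")
    case True then have "w = 0" using assms w unfolding norm_on_def by blast
    then show ?thesis using True by simp
  next
    case False
    then have Np: "N w > 0" using assms w unfolding norm_on_def by (metis less_eq_real_def)
    have "(1 / N w) *\<^sub>R w \<in> coordsub T" using w coordsub_scale by auto
    moreover have "N ((1 / N w) *\<^sub>R w) = 1" using assms w Np unfolding norm_on_def by simp
    ultimately have "((1 / N w) *\<^sub>R w) \<bullet> v \<in> ?A" by force
    then have "((1 / N w) *\<^sub>R w) \<bullet> v \<le> dual_on (coordsub T) N v"
      unfolding dual_on_def by (rule cSup_upper[OF _ bdd])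
    then show ?thesis using Np by (simp add: field_simps)
  qed
qed

lemma nnorm_eq: "nnorm (a::real^'n::finite) = norm a / sqrt (real CARD('n))"
  unfolding nnorm_def norm_vec_def L2_set_def by (simp add: real_sqrt_divide)

lemma nnorm_sq: "nnorm (a::real^'n::finite) ^ 2 = (a \<bullet> a) / real CARD('n)"
  by (simp add: nnorm_eq power_divide dot_square_norm)

lemma nnorm_nonneg: "nnorm a \<ge> 0"
  by (simp add: nnorm_eq)

lemma nnorm_pos: "a \<noteq> 0 \<Longrightarrow> nnorm a > 0"
  by (simp add: nnorm_eq)

lemma restr_split: "restr S x + restr (- S) x = x"
  by (auto simp: restr_def vec_eq_iff)

lemma restr_diff: "restr S (x - y) = restr S x - restr S y"
  by (auto simp: restr_def vec_eq_iff)

lemma restr_minus: "restr S (- x) = - restr S x"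
  by (auto simp: restr_def vec_eq_iff)

lemma restr_scale: "restr S (c *\<^sub>R x) = c *\<^sub>R restr S x"
  by (auto simp: restr_def vec_eq_iff)

lemma restr_restr: "restr S (restr S x) = restr S x"
  by (auto simp: restr_def vec_eq_iff)

lemma restr_compl_restr: "restr (- S) (restr S x) = 0" "restr S (restr (- S) x) = 0"
  by (auto simp: restr_def vec_eq_iff)

lemma restr_supp: "supp b \<subseteq> S \<Longrightarrow> restr S b = b" "supp b \<subseteq> S \<Longrightarrow> restr (- S) b = 0"
  by (auto simp: restr_def vec_eq_iff supp_def)

lemma inner_restr: "restr S u \<bullet> v = restr S u \<bullet> restr S v"
  unfolding inner_vec_def restr_def by (intro sum.cong) auto

lemma kkt_core:
  fixes R v :: "real^'n::finite"
  assumes R: "R \<noteq> 0"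
    and H: "\<And>t. 0 < t \<Longrightarrow> t \<le> 1 \<Longrightarrow> nnorm (R - t *\<^sub>R v) \<ge> nnorm R - t * D"
  shows "(R \<bullet> v) / (real CARD('n) * nnorm R) \<le> D"
proof -
  define m where "m = real CARD('n)"
  define sm where "sm = sqrt m"
  have m: "m > 0" by (simp add: m_def)
  have sm: "sm > 0" "sm * sm = m" using m by (auto simp: sm_def)
  define \<rho> where "\<rho> = norm R"
  have \<rho>: "\<rho> > 0" using R by (simp add: \<rho>_def)
  define E where "E = D * sm"
  have nn: "m * nnorm R = sm * \<rho>"
  proof -
    have "m * nnorm R = (sm * sm) * (\<rho> / sm)" using sm by (simp add: nnorm_eq \<rho>_def sm_def m_def)
    also have "\<dots> = sm * \<rho>" using sm by (simp add: field_simps)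
    finally show ?thesis .
  qed
  have H2: "norm (R - t *\<^sub>R v) \<ge> \<rho> - t * E" if "0 < t" "t \<le> 1" for t
  proof -
    have "nnorm R - t * D \<le> norm (R - t *\<^sub>R v) / sm" using H[OF that] by (simp add: nnorm_eq sm_def m_def)
    then have "(nnorm R - t * D) * sm \<le> norm (R - t *\<^sub>R v)" using sm by (simp add: field_simps)
    moreover have "nnorm R * sm = \<rho>" using sm by (simp add: nnorm_eq \<rho>_def sm_def m_def)
    ultimately show ?thesis by (simp add: E_def algebra_simps)
  qed
  show ?thesis
  proof (rule ccontr)
    assume "\<not> ?thesis"
    then have "D < (R \<bullet> v) / (m * nnorm R)" by (simp add: m_def)
    then have "D * (m * nnorm R) < R \<bullet> v" using m nnorm_pos[OF R] by (simp add: field_simps)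
    then have g: "R \<bullet> v - E * \<rho> > 0" using nn by (simp add: E_def algebra_simps)
    define g where "g = R \<bullet> v - E * \<rho>"
    define K where "K = v \<bullet> v + E^2 + 1"
    have K: "K > 0" unfolding K_def by (simp add: add_nonneg_pos)
    define t where "t = min 1 (min (\<rho> / (\<bar>E\<bar> + 1)) (g / K))"
    have t0: "t > 0" using \<rho> g K unfolding t_def g_def by auto
    have t1: "t \<le> 1" unfolding t_def by auto
    have tE: "t * E \<le> \<rho>"
    proof -
      have "t \<le> \<rho> / (\<bar>E\<bar> + 1)" unfolding t_def by auto
      then have "t * (\<bar>E\<bar> + 1) \<le> \<rho>" by (simp add: field_simps)
      moreover have "t * E \<le> t * (\<bar>E\<bar> + 1)" using t0 by (intro mult_left_mono) auto
      ultimately show ?thesis by linarith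
    qed
    have "t \<le> g / K" unfolding t_def by auto
    then have tg: "t * K \<le> g" using K by (simp add: le_divide_eq)
    have a: "(\<rho> - t * E)^2 \<le> (norm (R - t *\<^sub>R v))^2"
      using H2[OF t0 t1] tE by (intro power_mono) auto
    have b: "(norm (R - t *\<^sub>R v))^2 = \<rho>^2 - 2 * t * (R \<bullet> v) + t^2 * (v \<bullet> v)"
      unfolding \<rho>_def power2_norm_eq_inner by (simp add: inner_diff_left inner_diff_right algebra_simps power2_eq_square inner_commute)
    have "2 * t * g \<le> t^2 * (v \<bullet> v - E^2)" using a b unfolding g_def by (simp add: power2_eq_square algebra_simps)
    also have "\<dots> \<le> t^2 * K" unfolding K_def by (intro mult_left_mono) auto
    finally have "2 * t * g \<le> t * (t * K)" by (simp add: power2_eq_square)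
    then have "2 * g \<le> t * K" using t0 by simp
    then show False using tg g g_def by linarith
  qed
qed

lemma gamma_step:
  fixes P Q s e c1 c2 ls lm A B delta :: real and d :: ereal
  assumes e: "e > 0" and c1: "c1 > 0" and c2: "c2 > 0" and lsl: "ls + lm \<le> c1"
    and d0: "0 \<le> delta" and d1: "delta < 1" and A: "A \<ge> 0" and B: "B \<ge> 0" and s: "s \<ge> 0"
    and star: "P + s^2 + 2 * e * c2 * B \<le> Q + 2 * e * c1 * A"
    and dge: "d \<ge> 0"
    and dle: "A > 0 \<Longrightarrow> B \<le> c1 / c2 * ((1 + delta) / (1 - delta)) * A \<Longrightarrow> d \<le> ereal (s / A)"
  shows "ereal (P + 2 * delta * e * ((ls + lm) * A + c2 * B))
          \<le> ereal Q + ereal (e^2 * ((1 + delta) * c1)^2) * inverse (d * d)"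
proof -
  define x where "x = e * (1 + delta) * c1"
  have x: "x > 0" using e c1 d0 unfolding x_def by simp
  have C: "e^2 * ((1 + delta) * c1)^2 = x^2" unfolding x_def by (simp add: power_mult_distrib)
  have G0: "inverse (d * d) \<ge> 0" using dge by (intro inverse_ereal_ge0I) simp
  have t1: "2 * delta * e * ((ls + lm) * A) \<le> 2 * delta * e * (c1 * A)"
    using lsl A e d0 by (intro mult_left_mono mult_right_mono) auto
  have base: "P + 2 * delta * e * ((ls + lm) * A + c2 * B) \<le> Q + 2 * x * A - s^2 - 2 * e * (1 - delta) * c2 * B"
    using star t1 unfolding x_def by (simp add: algebra_simps)
  show ?thesis
  proof (cases "(1 + delta) * c1 * A \<le> (1 - delta) * c2 * B")
    case True
    have "2 * x * A \<le> 2 * e * (1 - delta) * c2 * B"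
    proof -
      have "2 * e * ((1 + delta) * c1 * A) \<le> 2 * e * ((1 - delta) * c2 * B)"
        using True e by (intro mult_left_mono) auto
      then show ?thesis unfolding x_def by (simp add: algebra_simps)
    qed
    then have "P + 2 * delta * e * ((ls + lm) * A + c2 * B) \<le> Q"
      using base s by (smt (verit) zero_le_power2)
    moreover have "ereal Q \<le> ereal Q + ereal (e^2 * ((1 + delta) * c1)^2) * inverse (d * d)"
      using G0 by (simp add: add_increasing2)
    ultimately show ?thesis by (meson ereal_less_eq(3) order_trans)
  next
    case False
    have Ap: "A > 0"
    proof (rule ccontr)
      assume "\<not> A > 0" then have "A = 0" using A by simp
      then show False using False B c2 d1 by simp
    qed
    have "(1 - delta) * c2 * B \<le> (1 + delta) * c1 * A" using False by simp
    then have "B \<le> (1 + delta) * c1 * A / ((1 - delta) * c2)" using c2 d1 by (simp add: field_simps)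
    also have "\<dots> = c1 / c2 * ((1 + delta) / (1 - delta)) * A" by (simp add: field_simps)
    finally have dl: "d \<le> ereal (s / A)" using dle Ap by blast
    show ?thesis
    proof (cases "d = 0")
      case True
      have "ereal (e^2 * ((1 + delta) * c1)^2) * inverse (d * d) = \<infinity>"
        using True C x by simp
      then have "ereal Q + ereal (e^2 * ((1 + delta) * c1)^2) * inverse (d * d) = \<infinity>" using e c1 d0 by simp
      then show ?thesis by (metis ereal_less_eq(1))
    next
      case False
      then obtain d' where d': "d = ereal d'" "d' > 0" "d' \<le> s / A" using dge dl
        by (cases d) auto
      have sp: "s > 0" using d' Ap by (smt (verit) divide_nonpos_pos)
      have inv: "inverse (d * d) = ereal (1 / (d' * d'))" using d' by (simp add: field_simps)
      have "d' * d' \<le> (s / A) * (s / A)" using d' by (intro mult_mono) auto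
      then have "1 / ((s / A) * (s / A)) \<le> 1 / (d' * d')" using d' sp Ap by (intro divide_left_mono) auto
      then have "A^2 / s^2 \<le> 1 / (d' * d')" using sp Ap by (simp add: power2_eq_square field_simps)
      then have k1: "x^2 * (A^2 / s^2) \<le> x^2 * (1 / (d' * d'))" by (intro mult_left_mono) auto
      have "0 \<le> (x * A / s - s)^2" by simp
      then have k2: "2 * x * A - s^2 \<le> x^2 * (A^2 / s^2)" using sp
        by (simp add: power2_eq_square field_simps)
      have k3: "2 * e * (1 - delta) * c2 * B \<ge> 0" using e d1 c2 B by simp
      have "P + 2 * delta * e * ((ls + lm) * A + c2 * B) \<le> Q + x^2 * (1 / (d' * d'))"
        using base k1 k2 k3 by linarith
      then show ?thesis using inv C by simp
    qed
  qed
qed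

lemma Omega_props:
  assumes "is_norm (Omega :: real^'p::finite \<Rightarrow> real)"
  shows "\<And>x. Omega x \<ge> 0" "Omega 0 = 0" "\<And>x. Omega (- x) = Omega x"
    "\<And>x y. Omega (x + y) \<le> Omega x + Omega y"
    "\<And>x c. Omega (c *\<^sub>R x) = \<bar>c\<bar> * Omega x"
    "\<And>x y. Omega (x - y) \<le> Omega x + Omega y"
    "\<And>x v. x \<bullet> v \<le> Omega x * dual_on UNIV Omega v"
    "\<And>v. dual_on UNIV Omega v \<ge> 0"
proof -
  have N: "norm_on (coordsub UNIV) Omega" using assms by simp
  show "\<And>x. Omega x \<ge> 0" using assms unfolding norm_on_def by auto
  show z: "Omega 0 = 0" using norm_on_zero[OF N] .
  show m: "\<And>x. Omega (- x) = Omega x" using norm_on_minus[OF N] by simp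
  show t: "\<And>x y. Omega (x + y) \<le> Omega x + Omega y" using assms unfolding norm_on_def by auto
  show "\<And>x c. Omega (c *\<^sub>R x) = \<bar>c\<bar> * Omega x" using assms unfolding norm_on_def by auto
  show "\<And>x y. Omega (x - y) \<le> Omega x + Omega y" using t m by (metis diff_conv_add_uminus)
  show "\<And>x v. x \<bullet> v \<le> Omega x * dual_on UNIV Omega v" using dual_props(2)[OF N] by simp
  show "\<And>v. dual_on UNIV Omega v \<ge> 0" using dual_props(1)[OF N] by simp
qed

lemma dual_decomp:
  assumes Om: "is_norm Omega" and wd: "wdec Omega S OSc"
  shows "dual_on UNIV Omega x \<le> max (dual_on UNIV Omega (restr S x)) (dual_on (coordsub (- S)) OSc (restr (- S) x))"
proof -
  define d1 where "d1 = dual_on UNIV Omega (restr S x)"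
  define d2 where "d2 = dual_on (coordsub (- S)) OSc (restr (- S) x)"
  have No: "norm_on (coordsub (- S)) OSc" using wd unfolding wdec_def by blast
  have "w \<bullet> x \<le> max d1 d2" if "Omega w \<le> 1" for w
  proof -
    have "w \<bullet> x = restr S w \<bullet> x + restr (- S) w \<bullet> x"
      by (metis inner_add_left restr_split)
    also have "\<dots> = restr S w \<bullet> restr S x + restr (- S) w \<bullet> restr (- S) x"
      by (simp add: inner_restr[of S w x] inner_restr[of "- S" w x])
    also have "\<dots> \<le> Omega (restr S w) * d1 + OSc (restr (- S) w) * d2"
      using Omega_props(7)[OF Om] dual_props(2)[OF No] unfolding d1_def d2_def
      by (intro add_mono) auto
    also have "\<dots> \<le> Omega (restr S w) * max d1 d2 + OSc (restr (- S) w) * max d1 d2"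
      using Omega_props(1)[OF Om] No unfolding norm_on_def
      by (intro add_mono mult_left_mono) auto
    also have "\<dots> = (Omega (restr S w) + OSc (restr (- S) w)) * max d1 d2" by (simp add: algebra_simps)
    also have "\<dots> \<le> Omega w * max d1 d2"
      using wd unfolding wdec_def
      by (intro mult_right_mono) (auto simp: d1_def d2_def Omega_props(8)[OF Om] le_max_iff_disj)
    also have "\<dots> \<le> max d1 d2"
      using that by (intro mult_left_le_one_le) (auto simp: d1_def Omega_props(1,8)[OF Om] le_max_iff_disj)
    finally show ?thesis .
  qed
  moreover have "0 \<bullet> x \<in> {w \<bullet> x |w. w \<in> UNIV \<and> Omega w \<le> 1}"
    using Omega_props(2)[OF Om] by (intro CollectI exI[of _ 0]) simp
  then have "{w \<bullet> x |w. w \<in> UNIV \<and> Omega w \<le> 1} \<noteq> {}" by blast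
  ultimately have "Sup {w \<bullet> x |w. w \<in> UNIV \<and> Omega w \<le> 1} \<le> max d1 d2"
    by (intro cSup_least) auto
  then show ?thesis unfolding dual_on_def d1_def d2_def by simp
qed

lemma core:
  fixes X :: "real^'p::finite^'n::finite" and beta0 betahat b :: "real^'p"
    and eps Y :: "real^'n" and Omega OSc :: "real^'p \<Rightarrow> real" and lam delta :: real and S :: "'p set"
  assumes model: "Y = X *v beta0 + eps"
    and eps_nz: "eps \<noteq> 0"
    and Om: "is_norm Omega"
    and lam_pos: "lam > 0"
    and betahat_min: "\<forall>b. nnorm (Y - X *v betahat) + lam * Omega betahat
                          \<le> nnorm (Y - X *v b) + lam * Omega b"
    and assI2: "lam0 X eps Omega / lam * (1 + 2 * f_q lam Omega beta0 eps) < 1"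
    and delta0: "0 \<le> delta" and delta1: "delta < 1"
    and wd: "wdec Omega S OSc" and sb: "supp b \<subseteq> S"
    and lmc: "3 * (1 + f_q lam Omega beta0 eps) * lam_m X eps Omega S OSc < lam"
  defines "f \<equiv> f_q lam Omega beta0 eps" and "l0 \<equiv> lam0 X eps Omega"
    and "lm \<equiv> lam_m X eps Omega S OSc"
  shows "0 \<le> lm \<and> lm < lam * (1 - l0 / lam * (1 + 2 * f)) / (f + 2)
     \<and> lam * (1 - l0 / lam * (1 + 2 * f)) / (f + 2) \<le> lam * (1 + f) \<and> 0 \<le> f \<and>
     ereal (nnorm (X *v (betahat - beta0))^2
               + 2 * delta * nnorm eps * ((lam * (1 - l0 / lam * (1 + 2 * f)) / (f + 2) + lm) * Omega (restr S betahat - b)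
                                         + (lam * (1 - l0 / lam * (1 + 2 * f)) / (f + 2) - lm) * OSc (restr (- S) betahat)))
        \<le> ereal (nnorm (X *v (b - beta0))^2)
          + ereal (nnorm eps^2 * ((1 + delta) * (lam * (1 + f) + lm))^2)
            * Gamma2 X Omega S OSc ((lam * (1 + f) + lm) / (lam * (1 - l0 / lam * (1 + 2 * f)) / (f + 2) - lm) * ((1 + delta) / (1 - delta)))"
proof -
  define lstar where "lstar = lam * (1 - l0 / lam * (1 + 2 * f)) / (f + 2)"
  define ltil where "ltil = lam * (1 + f)"
  define n where "n = real CARD('n)"
  define e where "e = nnorm eps"
  define \<xi> where "\<xi> = eps v* X"
  define u where "u = X *v (betahat - beta0)"
  define w where "w = X *v (betahat - b)"
  define ehat where "ehat = Y - X *v betahat"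
  define r where "r = nnorm ehat"
  define A where "A = Omega (restr S betahat - b)"
  define B where "B = OSc (restr (- S) betahat)"
  have n: "n > 0" by (simp add: n_def)
  have e: "e > 0" using nnorm_pos[OF eps_nz] by (simp add: e_def)
  have No: "norm_on (coordsub (- S)) OSc" using wd unfolding wdec_def by blast
  note Op = Omega_props[OF Om]
  have ehat_eq: "ehat = eps - u" unfolding ehat_def u_def model by (simp add: algebra_simps)
  have xi: "\<xi> \<bullet> x = eps \<bullet> (X *v x)" for x unfolding \<xi>_def by (rule dot_lmul_matrix)
  have l0e: "dual_on UNIV Omega \<xi> = l0 * (n * e)" using n e unfolding l0_def lam0_def \<xi>_def n_def e_def by simp
  have l0: "l0 \<ge> 0" unfolding l0_def lam0_def
    by (intro divide_nonneg_nonneg mult_nonneg_nonneg Op(8)) (auto simp: nnorm_nonneg)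
  have epsX: "eps \<bullet> (X *v x) \<le> Omega x * (l0 * (n * e))" for x using Op(7)[of x \<xi>] xi[of x] l0e by (simp add: inner_commute)
  have f0: "f \<ge> 0" unfolding f_def f_q_def using lam_pos
    by (intro divide_nonneg_nonneg mult_nonneg_nonneg) (auto simp: Op(1) nnorm_nonneg)
  have fe: "lam * Omega beta0 = f * e" unfolding f_def f_q_def e_def using e by (simp add: e_def)
  have r0: "r \<ge> 0" by (simp add: r_def nnorm_nonneg)
  have r_up: "r + lam * Omega betahat \<le> e + lam * Omega beta0"
    using betahat_min[rule_format, of beta0] unfolding r_def ehat_def e_def model by simp
  have r_low1: "n * e * e - eps \<bullet> u \<le> n * e * r"
  proof -
    have "eps \<bullet> (eps - u) \<le> norm eps * norm (eps - u)" by (rule norm_cauchy_schwarz)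
    moreover have "norm x = sqrt n * nnorm x" for x :: "real^'n" using n by (simp add: nnorm_eq n_def)
    moreover have "eps \<bullet> eps = n * e * e" using nnorm_sq[of eps] n by (simp add: e_def n_def power2_eq_square field_simps)
    moreover have "sqrt n * sqrt n = n" using n by simp
    ultimately have "norm eps * norm (eps - u) = (sqrt n * sqrt n) * e * r"
      unfolding r_def ehat_eq e_def by (simp add: algebra_simps)
    then have "norm eps * norm (eps - u) = n * e * r" using n by simp
    then show ?thesis using \<open>eps \<bullet> (eps - u) \<le> norm eps * norm (eps - u)\<close> \<open>eps \<bullet> eps = n * e * e\<close>
      by (simp add: inner_diff_right)
  qed
  have lamb: "lam * Omega betahat \<le> e + f * e" using r_up r0 fe by linarith
  have "eps \<bullet> u \<le> (Omega betahat + Omega beta0) * (l0 * (n * e))"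
    using epsX[of "betahat - beta0"] Op(6)[of betahat beta0] l0 n e unfolding u_def
    by (smt (verit) mult_nonneg_nonneg mult_right_mono)
  then have "n * e * e - (Omega betahat + Omega beta0) * (l0 * (n * e)) \<le> n * e * r" using r_low1 by linarith
  then have "(n * e) * (e - l0 * (Omega betahat + Omega beta0)) \<le> (n * e) * r" by (simp add: algebra_simps)
  then have rl: "e - l0 * (Omega betahat + Omega beta0) \<le> r" using n e by simp
  have "lam * e - l0 * (lam * Omega betahat + lam * Omega beta0) \<le> lam * r"
    using mult_left_mono[OF rl, of lam] lam_pos by (simp add: algebra_simps)
  moreover have "l0 * (lam * Omega betahat + lam * Omega beta0) \<le> l0 * (e + 2 * f * e)"
    using lamb fe l0 by (intro mult_left_mono) (auto simp: algebra_simps)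
  ultimately have r_low: "e * (lam - l0 * (1 + 2 * f)) \<le> r * lam" by (simp add: algebra_simps)
  have lstar_eq: "lstar = (lam - l0 * (1 + 2 * f)) / (f + 2)"
  proof -
    have "lam * (1 - l0 / lam * (1 + 2 * f)) = lam - l0 * (1 + 2 * f)"
      using lam_pos by (simp add: right_diff_distrib)
    then show ?thesis unfolding lstar_def by simp
  qed
  have q: "lam - l0 * (1 + 2 * f) > 0" using assI2 lam_pos unfolding l0_def f_def
    by (simp add: field_simps)
  have dS: "dual_on UNIV Omega (restr S \<xi>) = lamS X eps Omega S * (n * e)"
    using n e unfolding lamS_def \<xi>_def n_def e_def by simp
  have dSc: "dual_on (coordsub (- S)) OSc (restr (- S) \<xi>) = lamSc X eps S OSc * (n * e)"
    using n e unfolding lamSc_def \<xi>_def n_def e_def by simp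
  have lmS: "lamS X eps Omega S \<le> lm" and lmSc: "lamSc X eps S OSc \<le> lm"
    unfolding lm_def lam_m_def by auto
  have lamS0: "lamS X eps Omega S \<ge> 0" using Op(8) dS n e
    by (metis mult_pos_pos zero_le_mult_iff not_le)
  have lm0: "lm \<ge> 0" using lamS0 lmS by linarith
  have "l0 * (n * e) \<le> max (lamS X eps Omega S * (n * e)) (lamSc X eps S OSc * (n * e))"
    using dual_decomp[OF Om wd, of \<xi>] l0e dS dSc by simp
  also have "\<dots> \<le> lm * (n * e)" using lmS lmSc n e by (auto intro: mult_right_mono)
  finally have l0lm: "l0 \<le> lm" using n e by simp
  have lmc': "3 * (1 + f) * lm < lam" using lmc unfolding f_def lm_def .
  have "l0 * (1 + 2 * f) \<le> lm * (1 + 2 * f)" using l0lm f0 by (intro mult_right_mono) auto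
  then have "lam - l0 * (1 + 2 * f) - (f + 2) * lm > 0" using lmc' by (simp add: algebra_simps)
  then have "(lam - l0 * (1 + 2 * f)) / (f + 2) - lm > 0" using f0 by (simp add: field_simps)
  then have c2: "lstar - lm > 0" using lstar_eq by simp
  have lsl: "lstar \<le> ltil"
  proof -
    have "lstar \<le> lam / (f + 2)" unfolding lstar_eq using l0 f0 by (intro divide_right_mono) auto
    also have "\<dots> \<le> lam" using lam_pos f0 by (simp add: field_simps)
    also have "\<dots> \<le> ltil" unfolding ltil_def using lam_pos f0 by simp
    finally show ?thesis .
  qed
  have rl_up: "r * lam \<le> e * ltil"
  proof -
    have "lam * Omega betahat \<ge> 0" using Op(1)[of betahat] lam_pos by simp
    then have "r \<le> e * (1 + f)" using r_up fe by (simp add: algebra_simps)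
    then have "r * lam \<le> e * (1 + f) * lam" using lam_pos by (intro mult_right_mono) auto
    then show ?thesis unfolding ltil_def by (simp add: algebra_simps)
  qed
  have rl_low: "e * lstar \<le> r * lam"
  proof -
    have "e * lstar \<le> e * lstar * (f + 2)" using e c2 lm0 f0 by simp
    also have "\<dots> = e * (lam - l0 * (1 + 2 * f))" unfolding lstar_eq using f0 by simp
    finally show ?thesis using r_low by linarith
  qed
  have "e * lstar > 0" using e c2 lm0 by simp
  then have "r * lam > 0" using rl_low by linarith
  then have rpos: "r > 0" using lam_pos r0 by (simp add: zero_less_mult_iff)
  have ehat_nz: "ehat \<noteq> 0" using rpos unfolding r_def by (auto simp: nnorm_def)
  have K: "(ehat \<bullet> (X *v (b - betahat))) / (n * r) \<le> lam * (Omega b - Omega betahat)"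
    unfolding n_def r_def
  proof (rule kkt_core[OF ehat_nz])
    fix t :: real assume t: "0 < t" "t \<le> 1"
    have "nnorm (Y - X *v betahat) + lam * Omega betahat
           \<le> nnorm (Y - X *v (betahat + t *\<^sub>R (b - betahat))) + lam * Omega (betahat + t *\<^sub>R (b - betahat))"
      using betahat_min by blast
    moreover have "Y - X *v (betahat + t *\<^sub>R (b - betahat)) = ehat - t *\<^sub>R (X *v (b - betahat))"
      unfolding ehat_def by (simp add: algebra_simps matrix_vector_right_distrib)
    moreover have "Omega (betahat + t *\<^sub>R (b - betahat)) \<le> (1 - t) * Omega betahat + t * Omega b"
    proof -
      have "betahat + t *\<^sub>R (b - betahat) = (1 - t) *\<^sub>R betahat + t *\<^sub>R b" by (simp add: algebra_simps)
      then have "Omega (betahat + t *\<^sub>R (b - betahat)) \<le> Omega ((1 - t) *\<^sub>R betahat) + Omega (t *\<^sub>R b)"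
        using Op(4) by metis
      also have "\<dots> = (1 - t) * Omega betahat + t * Omega b" using Op(5) t by simp
      finally show ?thesis .
    qed
    ultimately have "nnorm ehat + lam * Omega betahat \<le> nnorm (ehat - t *\<^sub>R (X *v (b - betahat))) + lam * ((1 - t) * Omega betahat + t * Omega b)"
      using lam_pos unfolding ehat_def by (smt (verit) mult_left_mono)
    then show "nnorm ehat - t * (lam * (Omega b - Omega betahat)) \<le> nnorm (ehat - t *\<^sub>R (X *v (b - betahat)))"
      by (simp add: algebra_simps)
  qed
  have Xbb: "X *v (b - betahat) = - w" unfolding w_def by (simp add: algebra_simps)
  have K2: "u \<bullet> w - eps \<bullet> w \<le> n * (r * lam) * (Omega b - Omega betahat)"
  proof -
    have "ehat \<bullet> (X *v (b - betahat)) \<le> (n * r) * (lam * (Omega b - Omega betahat))"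
      using K n rpos by (simp add: divide_le_eq mult.commute)
    then show ?thesis unfolding Xbb ehat_eq by (simp add: algebra_simps inner_diff_left)
  qed
  have A0: "A \<ge> 0" unfolding A_def by (rule Op(1))
  have B0: "B \<ge> 0" using No unfolding B_def norm_on_def by simp
  have rsb: "restr S betahat - b = restr S (betahat - b)" by (metis restr_diff restr_supp(1)[OF sb])
  have "eps \<bullet> w = \<xi> \<bullet> (betahat - b)" unfolding w_def xi ..
  also have "betahat - b = restr S (betahat - b) + restr (- S) betahat"
    using restr_split[of S betahat] rsb by (simp add: algebra_simps)
  also have "\<xi> \<bullet> (restr S (betahat - b) + restr (- S) betahat)
      = restr S (betahat - b) \<bullet> restr S \<xi> + restr (- S) betahat \<bullet> restr (- S) \<xi>"
    using inner_restr[of S "betahat - b" \<xi>] inner_restr[of "- S" betahat \<xi>]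
    by (simp add: inner_add_right inner_commute)
  also have "\<dots> \<le> A * (lamS X eps Omega S * (n * e)) + B * (lamSc X eps S OSc * (n * e))"
    unfolding A_def B_def rsb dS[symmetric] dSc[symmetric]
    by (intro add_mono Op(7) dual_props(2)[OF No]) auto
  also have "\<dots> \<le> A * (lm * (n * e)) + B * (lm * (n * e))"
    using A0 B0 lmS lmSc n e by (intro add_mono mult_left_mono mult_right_mono) auto
  finally have epsw: "eps \<bullet> w \<le> n * e * lm * (A + B)" by (simp add: algebra_simps)
  have pen: "Omega b - Omega betahat \<le> A - B"
  proof -
    have "Omega betahat \<ge> Omega (restr S betahat) + B" using wd unfolding wdec_def B_def by blast
    moreover have "Omega b \<le> Omega (restr S betahat) + A"
      using Op(6)[of "restr S betahat" "restr S betahat - b"] Op(3) unfolding A_def by simp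
    ultimately show ?thesis by linarith
  qed
  have "n * (r * lam) * (Omega b - Omega betahat) \<le> n * (r * lam) * (A - B)"
    using pen n rpos lam_pos by (intro mult_left_mono) auto
  also have "\<dots> \<le> n * (e * ltil * A - e * lstar * B)"
  proof -
    have "r * lam * A \<le> e * ltil * A" using rl_up A0 by (intro mult_right_mono) auto
    moreover have "e * lstar * B \<le> r * lam * B" using rl_low B0 by (intro mult_right_mono) auto
    ultimately have "r * lam * (A - B) \<le> e * ltil * A - e * lstar * B" by (simp add: algebra_simps)
    then show ?thesis using n by (simp add: mult_left_mono mult.assoc)
  qed
  finally have uw: "u \<bullet> w \<le> n * (e * ltil * A - e * lstar * B) + n * e * lm * (A + B)"
    using K2 epsw by linarith
  have ubw: "X *v (b - beta0) = u - w" unfolding u_def w_def by (simp add: algebra_simps)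
  have pol: "nnorm u ^ 2 + nnorm w ^ 2 - nnorm (X *v (b - beta0)) ^ 2 = 2 * (u \<bullet> w) / n"
    unfolding ubw nnorm_sq n_def by (simp add: inner_diff_left inner_diff_right inner_commute field_simps)
  have star: "nnorm u ^ 2 + (nnorm w) ^ 2 + 2 * e * (lstar - lm) * B \<le> nnorm (X *v (b - beta0)) ^ 2 + 2 * e * (ltil + lm) * A"
  proof -
    have "2 * (u \<bullet> w) / n \<le> 2 * (e * ltil * A - e * lstar * B) + 2 * e * lm * (A + B)"
      using uw n by (simp add: field_simps)
    then show ?thesis using pol by (simp add: algebra_simps)
  qed
  define L where "L = (ltil + lm) / (lstar - lm) * ((1 + delta) / (1 - delta))"
  define d where "d = delta_Omega X Omega S OSc L"
  have dge: "d \<ge> 0" unfolding d_def delta_Omega_def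
    by (intro Inf_greatest) (auto simp: nnorm_nonneg)
  have dle: "d \<le> ereal (nnorm w / A)" if Ap: "A > 0" and BL: "B \<le> (ltil + lm) / (lstar - lm) * ((1 + delta) / (1 - delta)) * A"
  proof -
    define z where "z = restr S (betahat - b)"
    define bv where "bv = (1 / A) *\<^sub>R z - (1 / A) *\<^sub>R restr (- S) betahat"
    have r1: "restr S bv = (1 / A) *\<^sub>R z"
      unfolding bv_def z_def by (simp add: restr_diff restr_scale restr_restr restr_compl_restr)
    have r2: "restr (- S) bv = (- (1 / A)) *\<^sub>R restr (- S) betahat"
      unfolding bv_def z_def by (simp add: restr_diff restr_scale restr_restr restr_compl_restr)
    have o1: "Omega (restr S bv) = 1" unfolding r1 using Op(5) Ap unfolding A_def rsb z_def by simp
    have "OSc ((- (1 / A)) *\<^sub>R restr (- S) betahat) = \<bar>- (1 / A)\<bar> * OSc (restr (- S) betahat)"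
      using No restr_coordsub unfolding norm_on_def by blast
    then have "OSc (restr (- S) bv) = B / A" unfolding r2 B_def using Ap by simp
    also have "\<dots> \<le> L" unfolding L_def using BL Ap by (simp add: divide_le_eq mult.commute)
    finally have o2: "OSc (restr (- S) bv) \<le> L" .
    have "restr S bv - restr (- S) bv = (1 / A) *\<^sub>R (betahat - b)"
    proof -
      have "z + restr (- S) betahat = betahat - b"
        unfolding z_def using restr_split[of S betahat] rsb by (simp add: algebra_simps)
      then show ?thesis unfolding r1 r2 by (metis scaleR_minus_left diff_minus_eq_add scaleR_right_distrib)
    qed
    then have "X *v restr S bv - X *v restr (- S) bv = (1 / A) *\<^sub>R w"
      unfolding w_def by (metis matrix_vector_mult_diff_distrib matrix_vector_mult_scaleR)
    then have "nnorm (X *v restr S bv - X *v restr (- S) bv) = nnorm w / A"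
      using Ap by (simp add: nnorm_eq)
    then have "ereal (nnorm w / A) \<in> ereal ` {nnorm (X *v restr S b - X *v restr (- S) b) | b.
       Omega (restr S b) = 1 \<and> OSc (restr (- S) b) \<le> L}" using o1 o2 by force
    then show ?thesis unfolding d_def delta_Omega_def by (rule Inf_lower)
  qed
  have c1: "ltil + lm > 0" unfolding ltil_def using lam_pos f0 lm0 by (simp add: add_pos_nonneg)
  have main: "ereal (nnorm u ^ 2 + 2 * delta * e * ((lstar + lm) * A + (lstar - lm) * B))
          \<le> ereal (nnorm (X *v (b - beta0))^2) + ereal (e^2 * ((1 + delta) * (ltil + lm))^2) * inverse (d * d)"
    by (rule gamma_step[OF e c1 c2 _ delta0 delta1 A0 B0 nnorm_nonneg star dge dle]) (use lsl in auto)
  show ?thesis using main lm0 c2 lsl f0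
    unfolding Gamma2_def d_def L_def lstar_def ltil_def u_def A_def B_def e_def by simp
qed


lemma Gamma2_nonneg: "Gamma2 X Omega S OSc L \<ge> 0"
proof -
  have "delta_Omega X Omega S OSc L \<ge> 0" unfolding delta_Omega_def
    by (intro Inf_greatest) (auto simp: nnorm_nonneg)
  then show ?thesis unfolding Gamma2_def by (intro inverse_ereal_ge0I) simp
qed

lemma finish:
  fixes P Q e delta ls lm lt A B :: real and G :: ereal
  assumes lm0: "0 \<le> lm" and lms: "lm < ls" and e: "e > 0" and d0: "0 \<le> delta"
    and A: "A \<ge> 0" and B: "B \<ge> 0" and G: "G \<ge> 0" and lt: "lt + lm > 0" and P: "P \<ge> 0"
    and H: "ereal (P + 2 * delta * e * ((ls + lm) * A + (ls - lm) * B))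
            \<le> ereal Q + ereal (e^2 * ((1 + delta) * (lt + lm))^2) * G"
  shows "ereal P \<le> ereal Q + ereal (e^2 * (1 + delta)^2 * (lt + lm)^2) * G"
    and "delta > 0 \<Longrightarrow> ereal (A + B) \<le> ereal (1 / (2 * delta * e) * (Q / (ls - lm)))
            + ereal ((1 + delta)^2 * e / (2 * delta) * ((lt + lm)^2 / (ls - lm))) * G"
proof -
  have C: "e^2 * ((1 + delta) * (lt + lm))^2 = e^2 * (1 + delta)^2 * (lt + lm)^2"
    by (simp add: power_mult_distrib)
  have nn: "0 \<le> 2 * delta * e * ((ls + lm) * A + (ls - lm) * B)"
    using d0 e lm0 lms A B by (intro mult_nonneg_nonneg add_nonneg_nonneg) auto
  have "ereal P \<le> ereal (P + 2 * delta * e * ((ls + lm) * A + (ls - lm) * B))" using nn by simp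
  then show "ereal P \<le> ereal Q + ereal (e^2 * (1 + delta)^2 * (lt + lm)^2) * G"
    using H C by (metis order_trans)
  assume dp: "delta > 0"
  define K where "K = (1 + delta)^2 * e / (2 * delta) * ((lt + lm)^2 / (ls - lm))"
  have Kp: "K > 0" unfolding K_def using dp e lt lms by simp
  show "ereal (A + B) \<le> ereal (1 / (2 * delta * e) * (Q / (ls - lm))) + ereal K * G"
  proof (cases G)
    case PInf
    then show ?thesis using Kp by simp
  next
    case MInf
    then show ?thesis using G by simp
  next
    case (real g)
    have g: "g \<ge> 0" using G real by simp
    have Hr: "P + 2 * delta * e * ((ls + lm) * A + (ls - lm) * B) \<le> Q + e^2 * ((1 + delta) * (lt + lm))^2 * g"
      using H real by simp
    have "2 * delta * e * ((ls - lm) * (A + B)) \<le> 2 * delta * e * ((ls + lm) * A + (ls - lm) * B)"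
    proof -
      have "(ls - lm) * A \<le> (ls + lm) * A" using lm0 A by (intro mult_right_mono) auto
      then show ?thesis using dp e by (intro mult_left_mono) (auto simp: algebra_simps)
    qed
    then have "(2 * delta * e * (ls - lm)) * (A + B) \<le> Q + e^2 * ((1 + delta) * (lt + lm))^2 * g"
      using Hr P by (simp add: algebra_simps)
    moreover have pos: "2 * delta * e * (ls - lm) > 0" using dp e lms by simp
    ultimately have "A + B \<le> (Q + e^2 * ((1 + delta) * (lt + lm))^2 * g) / (2 * delta * e * (ls - lm))"
      by (simp add: le_divide_eq mult.commute)
    also have "\<dots> = 1 / (2 * delta * e) * (Q / (ls - lm)) + K * g"
    proof -
      have ne: "ls - lm \<noteq> 0" "delta \<noteq> 0" "e \<noteq> 0" using dp e lms by auto
      have "Q / (2 * delta * e * (ls - lm)) = 1 / (2 * delta * e) * (Q / (ls - lm))" by simp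
      moreover have "e^2 * ((1 + delta) * (lt + lm))^2 * g / (2 * delta * e * (ls - lm)) = K * g"
        unfolding K_def using ne by (simp add: power2_eq_square field_simps)
      ultimately show ?thesis by (simp add: add_divide_distrib)
    qed
    finally show ?thesis using real by simp
  qed
qed


theorem theorem1:
  fixes X :: "real^'p::finite^'n::finite" and beta0 betahat :: "real^'p"
    and eps Y :: "real^'n" and Omega :: "real^'p \<Rightarrow> real" and lam delta :: real
  assumes model: "Y = X *v beta0 + eps"
    and eps_nz: "eps \<noteq> 0"
    and Omega_norm: "is_norm Omega"
    and lam_pos: "lam > 0"
    and betahat_min: "\<forall>b. nnorm (Y - X *v betahat) + lam * Omega betahat
                          \<le> nnorm (Y - X *v b) + lam * Omega b"
    and assI1: "\<forall>b. X *v b = Y \<longrightarrow> nnorm eps < Omega b"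
    and assI2: "lam0 X eps Omega / lam * (1 + 2 * f_q lam Omega beta0 eps) < 1"
    and delta0: "0 \<le> delta" and delta1: "delta < 1"
  shows
   "let f = f_q lam Omega beta0 eps;
        l0 = lam0 X eps Omega;
        lstar = lam * (1 - l0 / lam * (1 + 2 * f)) / (f + 2);
        ltil = lam * (1 + f);
        LL = (\<lambda>lm. (ltil + lm) / (lstar - lm) * ((1 + delta) / (1 - delta)))
    in
    (\<forall>S OSc b. wdec Omega S OSc \<and> supp b \<subseteq> S \<and> 3 * (1 + f) * lam_m X eps Omega S OSc < lam \<longrightarrow>
       (let lm = lam_m X eps Omega S OSc in
        ereal (nnorm (X *v (betahat - beta0))^2
               + 2 * delta * nnorm eps * ((lstar + lm) * Omega (restr S betahat - b)
                                         + (lstar - lm) * OSc (restr (- S) betahat)))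
        \<le> ereal (nnorm (X *v (b - beta0))^2)
          + ereal (nnorm eps^2 * ((1 + delta) * (ltil + lm))^2) * Gamma2 X Omega S OSc (LL lm)))
    \<and>
    (\<forall>N bs Ss.
       let lmS = (\<lambda>S. lam_m X eps Omega S (N S));
           obj = (\<lambda>S b. ereal (nnorm (X *v (b - beta0))^2)
                        + ereal (nnorm eps^2 * ((1 + delta) * (ltil + lmS S))^2)
                          * Gamma2 X Omega S (N S) (LL (lmS S)))
       in
       (\<forall>S. allowed Omega S \<longrightarrow> wdec Omega S (N S)) \<and>
       (\<forall>S. allowed Omega S \<longrightarrow> supp (bs S) \<subseteq> S \<and>
              (\<forall>b. supp b \<subseteq> S \<longrightarrow> obj S (bs S) \<le> obj S b)) \<and>
       allowed Omega Ss \<and>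
       (\<forall>S. allowed Omega S \<longrightarrow> obj Ss (bs Ss) \<le> obj S (bs S)) \<and>
       3 * (1 + f) * lmS Ss < lam
       \<longrightarrow>
       (let lm = lmS Ss; bstar = bs Ss; G = Gamma2 X Omega Ss (N Ss) (LL lm) in
        ereal (nnorm (X *v (betahat - beta0))^2)
          \<le> ereal (nnorm (X *v (bstar - beta0))^2)
            + ereal (nnorm eps^2 * (1 + delta)^2 * (ltil + lm)^2) * G
        \<and>
        (delta > 0 \<longrightarrow>
          ereal (Omega (restr Ss betahat - bstar) + N Ss (restr (- Ss) betahat))
            \<le> ereal (1 / (2 * delta * nnorm eps) * (nnorm (X *v (bstar - beta0))^2 / (lstar - lm)))
              + ereal ((1 + delta)^2 * nnorm eps / (2 * delta) * ((ltil + lm)^2 / (lstar - lm))) * G)))"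
  unfolding Let_def
  apply (intro conjI allI impI)
  subgoal for S OSc b
    using core[OF model eps_nz Omega_norm lam_pos betahat_min assI2 delta0 delta1, of S OSc b] by blast
  subgoal premises h for N bs Ss
  proof -
    have wd: "wdec Omega Ss (N Ss)" using h by blast
    have sb: "supp (bs Ss) \<subseteq> Ss" using h by blast
    have lmc: "3 * (1 + f_q lam Omega beta0 eps) * lam_m X eps Omega Ss (N Ss) < lam" using h by blast
    note c = core[OF model eps_nz Omega_norm lam_pos betahat_min assI2 delta0 delta1 wd sb lmc]
    note cm = c[THEN conjunct2, THEN conjunct2, THEN conjunct2, THEN conjunct2]
    note l0 = c[THEN conjunct1]
    note lms = c[THEN conjunct2, THEN conjunct1]
    note f0 = c[THEN conjunct2, THEN conjunct2, THEN conjunct2, THEN conjunct1]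
    have epos: "nnorm eps > 0" using nnorm_pos[OF eps_nz] .
    have Aom: "Omega (restr Ss betahat - bs Ss) \<ge> 0" using Omega_props(1)[OF Omega_norm] .
    have Bn: "N Ss (restr (- Ss) betahat) \<ge> 0" using wd unfolding wdec_def norm_on_def by simp
    have ltp: "lam * (1 + f_q lam Omega beta0 eps) + lam_m X eps Omega Ss (N Ss) > 0"
      using lam_pos f0 l0 by (simp add: add_pos_nonneg)
    show ?thesis by (rule finish(1)[OF l0 lms epos delta0 Aom Bn Gamma2_nonneg ltp zero_le_power2 cm])
  qed
  subgoal premises h for N bs Ss
  proof -
    have wd: "wdec Omega Ss (N Ss)" using h by blast
    have sb: "supp (bs Ss) \<subseteq> Ss" using h by blast
    have lmc: "3 * (1 + f_q lam Omega beta0 eps) * lam_m X eps Omega Ss (N Ss) < lam" using h by blast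
    have dp: "delta > 0" using h by blast
    note c = core[OF model eps_nz Omega_norm lam_pos betahat_min assI2 delta0 delta1 wd sb lmc]
    note cm = c[THEN conjunct2, THEN conjunct2, THEN conjunct2, THEN conjunct2]
    note l0 = c[THEN conjunct1]
    note lms = c[THEN conjunct2, THEN conjunct1]
    note f0 = c[THEN conjunct2, THEN conjunct2, THEN conjunct2, THEN conjunct1]
    have epos: "nnorm eps > 0" using nnorm_pos[OF eps_nz] .
    have Aom: "Omega (restr Ss betahat - bs Ss) \<ge> 0" using Omega_props(1)[OF Omega_norm] .
    have Bn: "N Ss (restr (- Ss) betahat) \<ge> 0" using wd unfolding wdec_def norm_on_def by simp
    have ltp: "lam * (1 + f_q lam Omega beta0 eps) + lam_m X eps Omega Ss (N Ss) > 0"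
      using lam_pos f0 l0 by (simp add: add_pos_nonneg)
    show ?thesis by (rule finish(2)[OF l0 lms epos delta0 Aom Bn Gamma2_nonneg ltp zero_le_power2 cm dp])
  qed
  done

end
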